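(* Let $\sigma^2>0$. Consider the discrete-time memoryless channel with one-bit output quantization: for a Borel set $\mathcal{D}\subset\mathbb{R}$ (the quantization region), an input $x_k\in\mathbb{R}$ at time $k$ produces $\tilde Y_k=x_k+Z_k$ and output $Y_k=1$ if $\tilde Y_k\in\mathcal{D}$ and $Y_k=-1$ otherwise, where $Z_1,Z_2,\dots$ are i.i.d. Gaussian with mean $0$ and variance $\sigma^2$. Then the capacity per unit-energy of this channel (with the quantization region allowed to be optimized) is $$\dot C(0)=\frac{1}{2\sigma^2}.$$ Moreover, this value is achieved using threshold quantization regions: writing $P_{Y|X=x}^{\Upsilon}$ for the output distribution when the input is $x$ and $\mathcal{D}=\{\tilde y\in\mathbb{R}:\tilde y\ge \Upsilon\}$, i.e. $P(Y=1\mid X=x)=Q\bigl((\Upsilon-x)/\sigma\bigr)$, we have $$\sup_{\xi\neq 0,\ \Upsilon\in\mathbb{R}}\frac{D\bigl(P^{\Upsilon}_{Y|X=\xi}\,\big\|\,P^{\Upsilon}_{Y|X=0}\bigr)}{\xi^2}=\frac{1}{2\sigma^2}.$$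
   Context: $Q(x)=\frac{1}{\sqrt{2\pi}}\int_x^\infty e^{-t^2/2}\,dt$ is the Gaussian $Q$-function; $\log$ is the natural logarithm; $D(\cdot\|\cdot)$ is relative entropy. A message $M$ uniform on $\{1,\dots,\mathsf{M}\}$ is encoded into $x_1,\dots,x_n$ satisfying the energy constraint $\sum_{k=1}^n x_k^2\le \mathsf{E}$ for every message; the decoder sees $Y_1,\dots,Y_n$ and outputs $\hat M$. A rate per unit-energy $\dot R$ (nats per unit energy) is achievable if for every $\epsilon>0$ there exist an encoder, a quantization region $\mathcal{D}$ and a decoder with $\log\mathsf{M}/\mathsf{E}>\dot R-\epsilon$ and $\Pr(\hat M\neq M)\to 0$ as $\mathsf{E}\to\infty$. The capacity per unit-energy $\dot C(0)$ is the supremum of achievable rates per unit-energy. *)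

theory Defs
  imports "HOL-Probability.Probability"
begin

definition Qfun :: "real \<Rightarrow> real" where
  "Qfun x = (1 / sqrt (2 * pi)) * (\<integral>t\<in>{x..}. exp (- t\<^sup>2 / 2) \<partial>lborel)"

text \<open>Relative entropy between two distributions on {-1,1} given by the
  probabilities a = P(Y=1) and b = Q(Y=1) (natural logarithm).\<close>
definition binary_rel_entropy :: "real \<Rightarrow> real \<Rightarrow> real" where
  "binary_rel_entropy a b = a * ln (a / b) + (1 - a) * ln ((1 - a) / (1 - b))"

definition p_one :: "real \<Rightarrow> real set \<Rightarrow> real \<Rightarrow> real" where
  "p_one sigma2 D x = measure (density lborel (normal_density 0 (sqrt sigma2))) {z. x + z \<in> D}"

text \<open>Channel law of an output word (True = output 1, False = output -1)
  given an input word of length n (memoryless channel).\<close>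
definition out_prob :: "real \<Rightarrow> real set \<Rightarrow> nat \<Rightarrow> (nat \<Rightarrow> real) \<Rightarrow> bool list \<Rightarrow> real" where
  "out_prob sigma2 D n x ys =
     (\<Prod>k<n. if ys ! k then p_one sigma2 D (x k) else 1 - p_one sigma2 D (x k))"

text \<open>Average error probability (uniform message on {1..M}) of the code with
  block length n, encoder f (message, time), region D and decoder g.\<close>
definition err_prob :: "real \<Rightarrow> nat \<Rightarrow> nat \<Rightarrow> (nat \<Rightarrow> nat \<Rightarrow> real) \<Rightarrow> real set \<Rightarrow> (bool list \<Rightarrow> nat) \<Rightarrow> real" where
  "err_prob sigma2 n M f D g =
     (1 / real M) * (\<Sum>m\<in>{1..M}. \<Sum>ys\<in>{ys. length ys = n}.
        (if g ys \<noteq> m then out_prob sigma2 D n (f m) ys else 0))"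

definition energy_ok :: "nat \<Rightarrow> nat \<Rightarrow> (nat \<Rightarrow> nat \<Rightarrow> real) \<Rightarrow> real \<Rightarrow> bool" where
  "energy_ok n M f E = (\<forall>m\<in>{1..M}. (\<Sum>k<n. (f m k)\<^sup>2) \<le> E)"

definition achievable_rpue :: "real \<Rightarrow> real \<Rightarrow> bool" where
  "achievable_rpue sigma2 R =
    (\<forall>eps>0. \<exists>(n :: real \<Rightarrow> nat) (M :: real \<Rightarrow> nat) (f :: real \<Rightarrow> nat \<Rightarrow> nat \<Rightarrow> real)
        (D :: real \<Rightarrow> real set) (g :: real \<Rightarrow> bool list \<Rightarrow> nat).
       (\<forall>\<^sub>F E in at_top. M E \<ge> 1 \<and> D E \<in> sets borel \<and> energy_ok (n E) (M E) (f E) E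
                          \<and> ln (real (M E)) / E > R - eps)
       \<and> ((\<lambda>E. err_prob sigma2 (n E) (M E) (f E) (D E) (g E)) \<longlongrightarrow> 0) at_top)"

definition capacity_per_unit_energy :: "real \<Rightarrow> real" where
  "capacity_per_unit_energy sigma2 = Sup {R. achievable_rpue sigma2 R}"

end

theory Submission
  imports Defs
begin



lemma p_one_int:
  assumes s2: "sigma2 > 0" and D: "D \<in> sets borel"
  shows "p_one sigma2 D x = (\<integral>y. normal_density x (sqrt sigma2) y * indicator D y \<partial>lborel)"
proof -
  let ?s = "sqrt sigma2"
  have S: "{z. x + z \<in> D} \<in> sets borel" using D by measurable
  have "p_one sigma2 D x = measure (density lborel (normal_density 0 ?s)) {z. x + z \<in> D}"
    by (simp add: p_one_def)
  also have "\<dots> = integral\<^sup>L (density lborel (normal_density 0 ?s)) (indicator {z. x + z \<in> D})"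
    by simp
  also have "\<dots> = (\<integral>z. normal_density 0 ?s z * indicator {z. x + z \<in> D} z \<partial>lborel)"
    using S by (subst integral_density) auto
  also have "\<dots> = (\<integral>z. normal_density x ?s (x + 1 * z) * indicator D (x + 1 * z) \<partial>lborel)"
    by (intro Bochner_Integration.integral_cong) (auto simp: normal_density_def indicator_def)
  also have "\<dots> = (\<integral>y. normal_density x ?s y * indicator D y \<partial>lborel)"
    using lborel_integral_real_affine[of 1 "\<lambda>y. normal_density x ?s y * indicator D y" x] by simp
  finally show ?thesis .
qed




lemma exp_aux: "0 \<le> exp t * (t - 1) + (1::real)"
proof -
  have "1 - t \<le> exp (-t)" using exp_ge_add_one_self[of "-t"] by simp
  hence "exp t * (1 - t) \<le> exp t * exp (-t)" by (intro mult_left_mono) auto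
  thus ?thesis by (simp add: exp_minus field_simps)
qed

lemma pt_tangent:
  fixes w h r :: real
  assumes "w > 0" "r > 0"
  shows "w * exp h * ln r + w * exp h - r * w \<le> w * exp h * h"
proof -
  define t where "t = h - ln r"
  have e: "exp h = r * exp t" using assms by (simp add: t_def exp_diff)
  have "0 \<le> exp t * (t - 1) + 1" by (rule exp_aux)
  hence "0 \<le> (w * r) * (exp t * (t - 1) + 1)" using assms by simp
  thus ?thesis unfolding e t_def by (simp add: algebra_simps)
qed

lemma tangent_int:
  fixes F f g hh :: "real \<Rightarrow> real"
  assumes [measurable]: "B \<in> sets borel"
    and intf: "integrable lborel f" and intg: "integrable lborel g" and intF: "integrable lborel F"
    and gpos: "\<And>y. g y > 0" and fg: "\<And>y. f y = g y * exp (hh y)" and Ff: "\<And>y. F y = f y * hh y"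
    and r: "r > 0"
  shows "(\<integral>y. f y * indicator B y \<partial>lborel) * ln r + (\<integral>y. f y * indicator B y \<partial>lborel)
          - r * (\<integral>y. g y * indicator B y \<partial>lborel) \<le> (\<integral>y. F y * indicator B y \<partial>lborel)"
proof -
  have i1: "integrable lborel (\<lambda>y. f y * indicator B y)" by (rule integrable_real_mult_indicator) (auto simp: intf)
  have i2: "integrable lborel (\<lambda>y. g y * indicator B y)" by (rule integrable_real_mult_indicator) (auto simp: intg)
  have i3: "integrable lborel (\<lambda>y. F y * indicator B y)" by (rule integrable_real_mult_indicator) (auto simp: intF)
  have "(\<integral>y. f y * indicator B y \<partial>lborel) * ln r + (\<integral>y. f y * indicator B y \<partial>lborel)
          - r * (\<integral>y. g y * indicator B y \<partial>lborel)
        = (\<integral>y. (f y * indicator B y) * ln r + f y * indicator B y - r * (g y * indicator B y) \<partial>lborel)"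
    using i1 i2 by simp
  also have "\<dots> \<le> (\<integral>y. F y * indicator B y \<partial>lborel)"
  proof (rule integral_mono)
    show "integrable lborel (\<lambda>y. (f y * indicator B y) * ln r + f y * indicator B y - r * (g y * indicator B y))"
      using i1 i2 by auto
    show "integrable lborel (\<lambda>y. F y * indicator B y)" by (rule i3)
    fix y
    show "(f y * indicator B y) * ln r + f y * indicator B y - r * (g y * indicator B y) \<le> F y * indicator B y"
      using pt_tangent[OF gpos[of y] r, of "hh y"] unfolding fg Ff
      by (cases "y \<in> B") auto
  qed
  finally show ?thesis .
qed

lemma tangent_conc:
  fixes a b I :: real
  assumes H: "\<And>r. r > 0 \<Longrightarrow> a * ln r + a - r * b \<le> I" and a: "a \<ge> 0" and b: "b \<ge> 0"
  shows "(a > 0 \<longrightarrow> b > 0) \<and> a * ln (a / b) \<le> I"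
proof (cases "a = 0")
  case True
  have "0 \<le> I"
  proof (cases "b = 0")
    case True then show ?thesis using H[of 1] \<open>a = 0\<close> by simp
  next
    case False
    show ?thesis
    proof (rule ccontr)
      assume "\<not> 0 \<le> I"
      hence I: "I < 0" by simp
      have "b > 0" using b False by simp
      have rp: "0 < -I / (2*b)" using I \<open>b > 0\<close> by (simp add: field_simps)
      have "-(-I / (2*b)) * b \<le> I" using H[OF rp] True by simp
      thus False using I \<open>b > 0\<close> by (simp add: field_simps)
    qed
  qed
  thus ?thesis using True by simp
next
  case False
  hence apos: "a > 0" using a by simp
  have bpos: "b > 0"
  proof (rule ccontr)
    assume "\<not> b > 0" hence "b = 0" using b by simp
    have "a * ln (exp ((I - a)/a + 1)) + a - exp ((I - a)/a + 1) * b \<le> I" by (rule H) simp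
    hence "a * ((I - a)/a + 1) + a \<le> I" using \<open>b = 0\<close> by simp
    thus False using apos by (simp add: field_simps)
  qed
  have "a * ln (a/b) + a - (a/b) * b \<le> I" by (rule H) (use apos bpos in simp)
  thus ?thesis using apos bpos by simp
qed




lemma dpi_gauss:
  assumes s2: "sigma2 > 0" and D[measurable]: "D \<in> sets borel"
  shows "binary_rel_entropy (p_one sigma2 D u) (p_one sigma2 D v) \<le> (u - v)\<^sup>2 / (2 * sigma2)
    \<and> (p_one sigma2 D u > 0 \<longrightarrow> p_one sigma2 D v > 0)
    \<and> (p_one sigma2 D u < 1 \<longrightarrow> p_one sigma2 D v < 1)"
proof -
  define s where "s = sqrt sigma2"
  have s: "s > 0" "s\<^sup>2 = sigma2" using s2 by (auto simp: s_def)
  define f where "f = normal_density u s"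
  define g where "g = normal_density v s"
  define hh where "hh y = (2*y*(u-v) + v\<^sup>2 - u\<^sup>2) / (2* sigma2)" for y
  define F where "F y = f y * hh y" for y
  have fg: "f y = g y * exp (hh y)" for y
  proof -
    have "-(y-u)\<^sup>2 / (2* s\<^sup>2) = -(y-v)\<^sup>2 / (2* s\<^sup>2) + hh y"
      using s2 s by (simp add: hh_def field_simps power2_eq_square)
    hence "exp (-(y-u)\<^sup>2 / (2* s\<^sup>2)) = exp (-(y-v)\<^sup>2 / (2* s\<^sup>2)) * exp (hh y)"
      by (simp add: exp_add[symmetric])
    thus ?thesis by (simp add: f_def g_def normal_density_def)
  qed
  have Dl: "D \<in> sets lborel" "-D \<in> sets lborel" by auto
  have gpos: "g y > 0" for y using normal_density_pos[OF s(1)] by (simp add: g_def)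
  have intf: "integrable lborel f" using integrable_normal_density[OF s(1)] by (simp add: f_def)
  have intg: "integrable lborel g" using integrable_normal_density[OF s(1)] by (simp add: g_def)
  have Feq: "F = (\<lambda>y. (u-v)/sigma2 * (f y * y) + (v\<^sup>2-u\<^sup>2)/(2* sigma2) * f y)"
    using s2 by (auto simp: F_def hh_def fun_eq_iff field_simps)
  have intfy: "integrable lborel (\<lambda>y. f y * y)" unfolding f_def by (rule integrable_normal_moment_nz_1[OF s(1)])
  have intF: "integrable lborel F" unfolding Feq using intfy intf by auto
  have intFv: "(\<integral>y. F y \<partial>lborel) = (u - v)\<^sup>2 / (2 * sigma2)"
  proof -
    have "(\<integral>y. F y \<partial>lborel) = (u-v)/sigma2 * u + (v\<^sup>2-u\<^sup>2)/(2* sigma2)"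
      unfolding Feq using intfy intf integral_normal_moment_nz_1[OF s(1), of u] integral_normal_density[OF s(1), of u]
      by (simp add: f_def)
    also have "\<dots> = (u - v)\<^sup>2 / (2 * sigma2)" using s2 by (simp add: field_simps power2_eq_square)
    finally show ?thesis .
  qed
  have pu: "p_one sigma2 D u = (\<integral>y. f y * indicator D y \<partial>lborel)"
    using p_one_int[OF s2 D] by (simp add: f_def s_def)
  have pv: "p_one sigma2 D v = (\<integral>y. g y * indicator D y \<partial>lborel)"
    using p_one_int[OF s2 D] by (simp add: g_def s_def)
  have cmp: "(\<integral>y. k y * indicator (-D) y \<partial>lborel) = 1 - (\<integral>y. k y * indicator D y \<partial>lborel)"
    if "k = f \<or> k = g" for k
  proof -
    have ik: "integrable lborel k" "(\<integral>y. k y \<partial>lborel) = 1" using that intf intg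
      by (auto simp: f_def g_def integral_normal_density[OF s(1)])
    have "(\<integral>y. k y * indicator (-D) y \<partial>lborel) = (\<integral>y. k y - k y * indicator D y \<partial>lborel)"
      by (intro Bochner_Integration.integral_cong) (auto simp: indicator_def)
    also have "\<dots> = 1 - (\<integral>y. k y * indicator D y \<partial>lborel)"
      using ik integrable_real_mult_indicator[OF Dl(1) ik(1)] by simp
    finally show ?thesis .
  qed
  have nn: "0 \<le> (\<integral>y. k y * indicator B y \<partial>lborel)" if "k = f \<or> k = g" for k B
    using that by (auto intro!: integral_nonneg simp: f_def g_def)
  have Isum: "(\<integral>y. F y * indicator D y \<partial>lborel) + (\<integral>y. F y * indicator (-D) y \<partial>lborel)
      = (\<integral>y. F y \<partial>lborel)"
  proof -
    have "(\<integral>y. F y * indicator D y \<partial>lborel) + (\<integral>y. F y * indicator (-D) y \<partial>lborel)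
       = (\<integral>y. F y * indicator D y + F y * indicator (-D) y \<partial>lborel)"
      using integrable_real_mult_indicator[OF Dl(1) intF] integrable_real_mult_indicator[OF Dl(2) intF]
      by simp
    also have "\<dots> = (\<integral>y. F y \<partial>lborel)"
      by (intro Bochner_Integration.integral_cong) (auto simp: indicator_def)
    finally show ?thesis .
  qed
  have nnf: "0 \<le> (\<integral>y. f y * indicator B y \<partial>lborel)" for B using nn by blast
  have nng: "0 \<le> (\<integral>y. g y * indicator B y \<partial>lborel)" for B using nn by blast
  note T1 = tangent_conc[OF tangent_int[OF D intf intg intF gpos fg F_def] nnf nng]
  note T2 = tangent_conc[OF tangent_int[of "-D", OF _ intf intg intF gpos fg F_def] nnf nng]
  have cf: "(\<integral>y. f y * indicator (-D) y \<partial>lborel) = 1 - (\<integral>y. f y * indicator D y \<partial>lborel)"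
    using cmp by blast
  have cg: "(\<integral>y. g y * indicator (-D) y \<partial>lborel) = 1 - (\<integral>y. g y * indicator D y \<partial>lborel)"
    using cmp by blast
  show ?thesis
    using T1 T2 Isum intFv unfolding binary_rel_entropy_def pu pv cf cg by auto
qed




lemma mgf_pt:
  assumes s: "s > 0"
  shows "exp (m * y) * normal_density u s y = exp (m * u + m\<^sup>2 * s\<^sup>2 / 2) * normal_density (u + m * s\<^sup>2) s y"
proof -
  have "m * y + (-(y - u)\<^sup>2 / (2 * s\<^sup>2)) = (m * u + m\<^sup>2 * s\<^sup>2 / 2) + (-(y - (u + m * s\<^sup>2))\<^sup>2 / (2 * s\<^sup>2))"
    using s by (simp add: field_simps power2_eq_square)
  hence "exp (m * y) * exp (-(y - u)\<^sup>2 / (2 * s\<^sup>2)) = exp (m * u + m\<^sup>2 * s\<^sup>2 / 2) * exp (-(y - (u + m * s\<^sup>2))\<^sup>2 / (2 * s\<^sup>2))"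
    by (simp add: exp_add[symmetric])
  thus ?thesis unfolding normal_density_def by (simp add: algebra_simps)
qed

lemma tail_bound:
  assumes s: "s > 0" and B[measurable]: "B \<in> sets borel" and Bw: "\<And>y. y \<in> B \<Longrightarrow> m * (y - w) \<ge> 0"
  shows "(\<integral>y. normal_density u s y * indicator B y \<partial>lborel) \<le> exp (m * (u - w) + m\<^sup>2 * s\<^sup>2 / 2)"
proof -
  let ?c = "exp (m * u + m\<^sup>2 * s\<^sup>2 / 2)"
  have eq: "exp (m * (y - w)) * normal_density u s y = exp (- m * w) * (?c * normal_density (u + m * s\<^sup>2) s y)" for y
    using mgf_pt[OF s, of m y u] by (simp add: algebra_simps exp_diff exp_minus field_simps)
  have int1: "integrable lborel (\<lambda>y. exp (m * (y - w)) * normal_density u s y)"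
    unfolding eq using integrable_normal_density[OF s] by auto
  have "(\<integral>y. normal_density u s y * indicator B y \<partial>lborel) \<le> (\<integral>y. exp (m * (y - w)) * normal_density u s y \<partial>lborel)"
  proof (rule integral_mono)
    show "integrable lborel (\<lambda>y. normal_density u s y * indicator B y)"
      by (rule integrable_real_mult_indicator) (auto simp: integrable_normal_density[OF s])
    show "integrable lborel (\<lambda>y. exp (m * (y - w)) * normal_density u s y)" by (rule int1)
    fix y
    show "normal_density u s y * indicator B y \<le> exp (m * (y - w)) * normal_density u s y"
    proof (cases "y \<in> B")
      case True
      hence "1 \<le> exp (m * (y - w))" using Bw by simp
      hence "1 * normal_density u s y \<le> exp (m * (y - w)) * normal_density u s y"
        by (intro mult_right_mono) auto
      thus ?thesis using True by simp
    qed auto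
  qed
  also have "\<dots> = exp (- m * w) * ?c"
    unfolding eq using integral_normal_density[OF s] by simp
  also have "\<dots> = exp (m * (u - w) + m\<^sup>2 * s\<^sup>2 / 2)" by (simp add: exp_add[symmetric] algebra_simps)
  finally show ?thesis .
qed

lemma upper_tail:
  assumes s2: "sigma2 > 0" and t: "T \<ge> u"
  shows "p_one sigma2 {y. T \<le> y} u \<le> exp (-(T - u)\<^sup>2 / (2 * sigma2))"
proof -
  have s: "sqrt sigma2 > 0" "(sqrt sigma2)\<^sup>2 = sigma2" using s2 by auto
  have "p_one sigma2 {y. T \<le> y} u = (\<integral>y. normal_density u (sqrt sigma2) y * indicator {y. T \<le> y} y \<partial>lborel)"
    by (rule p_one_int[OF s2]) measurable
  also have "\<dots> \<le> exp (((T - u)/sigma2) * (u - T) + ((T - u)/sigma2)\<^sup>2 * (sqrt sigma2)\<^sup>2 / 2)"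
    by (rule tail_bound[OF s(1)]) (use t s2 in auto)
  also have "\<dots> = exp (-(T - u)\<^sup>2 / (2 * sigma2))" using s2 by (simp add: field_simps power2_eq_square)
  finally show ?thesis .
qed

lemma p_one_range:
  assumes s2: "sigma2 > 0"
  shows "0 \<le> p_one sigma2 D x" "p_one sigma2 D x \<le> 1"
proof -
  interpret prob_space "density lborel (normal_density 0 (sqrt sigma2))"
    by (rule prob_space_normal_density) (use s2 in simp)
  show "0 \<le> p_one sigma2 D x" "p_one sigma2 D x \<le> 1" unfolding p_one_def by auto
qed

lemma lower_tail:
  assumes s2: "sigma2 > 0" and t: "T \<le> u"
  shows "1 - p_one sigma2 {y. T \<le> y} u \<le> exp (-(u - T)\<^sup>2 / (2 * sigma2))"
proof -
  have s: "sqrt sigma2 > 0" "(sqrt sigma2)\<^sup>2 = sigma2" using s2 by auto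
  let ?f = "normal_density u (sqrt sigma2)"
  have D: "{y. T \<le> y} \<in> sets lborel" "{y. y < T} \<in> sets lborel" by auto
  have "1 - p_one sigma2 {y. T \<le> y} u = (\<integral>y. ?f y \<partial>lborel) - (\<integral>y. ?f y * indicator {y. T \<le> y} y \<partial>lborel)"
    using p_one_int[OF s2, of "{y. T \<le> y}" u] integral_normal_density[OF s(1)] by simp
  also have "\<dots> = (\<integral>y. ?f y - ?f y * indicator {y. T \<le> y} y \<partial>lborel)"
    using integrable_real_mult_indicator[OF D(1) integrable_normal_density[OF s(1)]] integrable_normal_density[OF s(1)]
    by simp
  also have "\<dots> = (\<integral>y. ?f y * indicator {y. y < T} y \<partial>lborel)"
    by (intro Bochner_Integration.integral_cong) (auto simp: indicator_def)
  also have "\<dots> \<le> exp ((-(u - T)/sigma2) * (u - T) + (-(u - T)/sigma2)\<^sup>2 * (sqrt sigma2)\<^sup>2 / 2)"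
    by (rule tail_bound[OF s(1)]) (use t s2 in \<open>auto simp: mult_nonpos_nonpos divide_nonpos_pos\<close>)
  also have "\<dots> = exp (-(u - T)\<^sup>2 / (2 * sigma2))" using s2 by (simp add: field_simps power2_eq_square)
  finally show ?thesis .
qed

lemma Qfun_p_one:
  assumes s2: "sigma2 > 0"
  shows "Qfun ((T - x) / sqrt sigma2) = p_one sigma2 {y. T \<le> y} x"
proof -
  define s where "s = sqrt sigma2"
  have s: "s > 0" using s2 by (simp add: s_def)
  let ?g = "\<lambda>y. normal_density x s y * indicator {y. T \<le> y} y"
  have "p_one sigma2 {y. T \<le> y} x = (\<integral>y. ?g y \<partial>lborel)"
    unfolding s_def by (rule p_one_int[OF s2]) measurable
  also have "\<dots> = \<bar>s\<bar> *\<^sub>R (\<integral>t. ?g (x + s * t) \<partial>lborel)"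
    by (rule lborel_integral_real_affine) (use s in simp)
  also have "\<dots> = (\<integral>t. s * ?g (x + s * t) \<partial>lborel)" using s by simp
  also have "\<dots> = (\<integral>t. indicator {(T - x) / s..} t *\<^sub>R ((1 / sqrt (2 * pi)) * exp (- t\<^sup>2 / 2)) \<partial>lborel)"
  proof (intro Bochner_Integration.integral_cong refl)
    fix t
    have i: "indicator {y. T \<le> y} (x + s * t) = (indicator {(T - x) / s..} t :: real)"
      using s by (auto simp: indicator_def field_simps)
    have "s * normal_density x s (x + s * t) = (1 / sqrt (2 * pi)) * exp (- t\<^sup>2 / 2)"
      using s by (simp add: normal_density_def real_sqrt_mult power2_eq_square field_simps)
    thus "s * ?g (x + s * t) = indicator {(T - x) / s..} t *\<^sub>R ((1 / sqrt (2 * pi)) * exp (- t\<^sup>2 / 2))"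
      unfolding i by (metis (no_types, lifting) mult.assoc mult.commute real_scaleR_def)
  qed
  also have "\<dots> = Qfun ((T - x) / s)"
    unfolding Qfun_def set_lebesgue_integral_def by (simp add: algebra_simps)
  finally show ?thesis by (simp add: s_def)
qed




lemma xlnxy:
  fixes x y :: real
  assumes "x \<ge> 0" "y \<ge> 0" "x > 0 \<longrightarrow> y > 0"
  shows "x - y \<le> x * ln (x / y)"
proof (cases "x = 0")
  case True thus ?thesis using assms by simp
next
  case False
  hence xy: "x > 0" "y > 0" using assms by auto
  have "ln (y / x) \<le> y / x - 1" using xy by (intro ln_le_minus_one) auto
  hence "x * ln (y / x) \<le> x * (y / x - 1)" using xy by (intro mult_left_mono) auto
  moreover have "ln (x / y) = - ln (y / x)" using xy by (simp add: ln_div)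
  moreover have "x * (y / x - 1) = y - x" using xy by (simp add: field_simps)
  ultimately show ?thesis by simp
qed

lemma xlnx: "x \<ge> 0 \<Longrightarrow> x - 1 \<le> x * ln (x::real)"
  using xlnxy[of x 1] by simp

lemma Fsup:
  assumes s2: "sigma2 > 0"
  shows "(SUP p \<in> {p :: real \<times> real. fst p \<noteq> 0}.
          binary_rel_entropy (Qfun ((snd p - fst p) / sqrt sigma2)) (Qfun (snd p / sqrt sigma2))
            / (fst p)\<^sup>2) = 1 / (2 * sigma2)"
proof -
  define K where "K = 1 / (2 * sigma2)"
  have K: "K > 0" using s2 by (simp add: K_def)
  define F where "F p = binary_rel_entropy (Qfun ((snd p - fst p) / sqrt sigma2)) (Qfun (snd p / sqrt sigma2))
            / (fst p)\<^sup>2" for p :: "real \<times> real"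
  define S where "S = {p :: real \<times> real. fst p \<noteq> 0}"
  have Feq: "F (\<xi>, T) = binary_rel_entropy (p_one sigma2 {y. T \<le> y} \<xi>) (p_one sigma2 {y. T \<le> y} 0) / \<xi>\<^sup>2" for \<xi> T
    using Qfun_p_one[OF s2, of T \<xi>] Qfun_p_one[OF s2, of T 0] by (simp add: F_def)
  have up: "F p \<le> K" if "p \<in> S" for p
  proof -
    obtain \<xi> T where p: "p = (\<xi>, T)" by (cases p)
    have xi: "\<xi>\<^sup>2 > 0" using that p by (simp add: S_def)
    have "binary_rel_entropy (p_one sigma2 {y. T \<le> y} \<xi>) (p_one sigma2 {y. T \<le> y} 0) \<le> (\<xi> - 0)\<^sup>2 / (2 * sigma2)"
      using dpi_gauss[OF s2, of "{y. T \<le> y}" \<xi> 0] by auto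
    thus ?thesis unfolding p Feq K_def using xi s2 by (simp add: divide_le_eq field_simps)
  qed
  have lo: "\<exists>p\<in>S. F p > K - \<delta>" if d: "\<delta> > 0" for \<delta>
  proof -
    define d where "d = min \<delta> K"
    have d: "d > 0" "d \<le> K" "d \<le> \<delta>" using d K by (auto simp: d_def)
    define x where "x = d / (4 * K)"
    have x: "0 < x" "x \<le> 1/4" using d K by (auto simp: x_def field_simps)
    define \<beta> where "\<beta> = 1 - x / 2"
    have \<beta>: "0 < \<beta>" "\<beta> < 1" "1 - x \<le> \<beta>\<^sup>2" using x by (auto simp: \<beta>_def power2_eq_square field_simps)
    define A where "A = ln (4 * K / d) / ((1 - \<beta>)\<^sup>2 * K)"
    have A: "A \<ge> 0" using d K \<beta> by (auto simp: A_def)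
    define \<xi> where "\<xi> = sqrt (A + 16 / d)"
    have \<xi>: "\<xi> > 0" "\<xi>\<^sup>2 = A + 16 / d" using A d by (auto simp: \<xi>_def add_nonneg_pos)
    define T where "T = \<beta> * \<xi>"
    define a where "a = p_one sigma2 {y. T \<le> y} \<xi>"
    define b where "b = p_one sigma2 {y. T \<le> y} 0"
    have ab: "0 \<le> a" "a \<le> 1" "0 \<le> b" "b \<le> 1" using p_one_range[OF s2] by (auto simp: a_def b_def)
    have dp: "a > 0 \<longrightarrow> b > 0" "a < 1 \<longrightarrow> b < 1"
      using dpi_gauss[OF s2, of "{y. T \<le> y}" \<xi> 0] by (auto simp: a_def b_def)
    have bt: "b \<le> exp (-(T - 0)\<^sup>2 / (2 * sigma2))" unfolding b_def
      by (rule upper_tail[OF s2]) (use \<beta> \<xi> in \<open>simp add: T_def\<close>)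
    have at: "1 - a \<le> exp (-(\<xi> - T)\<^sup>2 / (2 * sigma2))" unfolding a_def
      by (rule lower_tail[OF s2]) (use \<beta> \<xi> in \<open>simp add: T_def\<close>)
    have "-(\<xi> - T)\<^sup>2 / (2 * sigma2) = - ((1 - \<beta>)\<^sup>2 * K) * \<xi>\<^sup>2"
      using s2 by (simp add: T_def K_def power2_eq_square field_simps)
    also have "\<dots> \<le> - ((1 - \<beta>)\<^sup>2 * K) * A"
      using \<xi> d \<beta> K by (intro mult_left_mono_neg) auto
    also have "\<dots> = - ln (4 * K / d)" using \<beta> K by (simp add: A_def)
    finally have "1 - a \<le> exp (- ln (4 * K / d))" using at by (meson exp_le_cancel_iff order.trans)
    also have "\<dots> = x" using d K by (simp add: exp_minus x_def)
    finally have a1: "1 - x \<le> a" by simp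
    have apos: "a > 0" using a1 x by simp
    have bpos: "b > 0" using dp apos by simp
    have lnb: "ln b \<le> -(\<beta>\<^sup>2 * K) * \<xi>\<^sup>2"
    proof -
      have "ln b \<le> ln (exp (-(T - 0)\<^sup>2 / (2 * sigma2)))" using bt bpos by (subst ln_le_cancel_iff) auto
      hence "ln b \<le> -(T - 0)\<^sup>2 / (2 * sigma2)" by simp
      thus ?thesis by (simp add: T_def K_def power_mult_distrib)
    qed
    have e1: "a - 1 - a * ln b \<le> a * ln (a / b)"
      using xlnx[of a] ab apos bpos by (simp add: ln_div algebra_simps)
    have e2: "(1 - a) - (1 - b) \<le> (1 - a) * ln ((1 - a) / (1 - b))"
      by (rule xlnxy) (use ab dp in auto)
    have "a * ((\<beta>\<^sup>2 * K) * \<xi>\<^sup>2) \<le> a * (- ln b)" using lnb ab(1) by (intro mult_left_mono) auto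
    hence "a * (\<beta>\<^sup>2 * K) * \<xi>\<^sup>2 - 2 \<le> - a * ln b - 2" by (simp add: mult.assoc)
    also have "\<dots> \<le> binary_rel_entropy a b"
      unfolding binary_rel_entropy_def using e1 e2 ab by linarith
    finally have B: "a * (\<beta>\<^sup>2 * K) * \<xi>\<^sup>2 - 2 \<le> binary_rel_entropy a b" .
    have "(1 - x) * (1 - x) \<le> a * \<beta>\<^sup>2" using a1 \<beta> x by (intro mult_mono) auto
    moreover have "(1 - x) * (1 - x) = 1 - 2 * x + x * x" by algebra
    moreover have "x * x \<ge> 0" by simp
    ultimately have "1 - 2 * x \<le> a * \<beta>\<^sup>2" by linarith
    hence "(1 - 2 * x) * K \<le> a * \<beta>\<^sup>2 * K" using K by (intro mult_right_mono) auto
    moreover have "(1 - 2 * x) * K = K - d / 2" using K by (simp add: x_def field_simps)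
    ultimately have ab2: "K - d / 2 \<le> a * \<beta>\<^sup>2 * K" by simp
    have xi2: "2 / \<xi>\<^sup>2 \<le> d / 8"
    proof -
      have "16 / d \<le> \<xi>\<^sup>2" using \<xi> A by simp
      thus ?thesis using d \<xi> by (simp add: field_simps)
    qed
    have "F (\<xi>, T) = binary_rel_entropy a b / \<xi>\<^sup>2" by (simp add: Feq a_def b_def)
    also have "\<dots> \<ge> (a * (\<beta>\<^sup>2 * K) * \<xi>\<^sup>2 - 2) / \<xi>\<^sup>2"
      using B by (intro divide_right_mono) auto
    finally have F1: "F (\<xi>, T) \<ge> (a * (\<beta>\<^sup>2 * K) * \<xi>\<^sup>2 - 2) / \<xi>\<^sup>2" .
    have q: "\<xi>\<^sup>2 > 0" using \<xi>(1) by simp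
    have "(a * (\<beta>\<^sup>2 * K) * \<xi>\<^sup>2 - 2) / \<xi>\<^sup>2 = a * \<beta>\<^sup>2 * K - 2 / \<xi>\<^sup>2"
      using q by (simp add: diff_divide_distrib)
    hence "F (\<xi>, T) \<ge> a * \<beta>\<^sup>2 * K - 2 / \<xi>\<^sup>2" using F1 by simp
    hence "F (\<xi>, T) > K - \<delta>" using ab2 xi2 d by linarith
    moreover have "(\<xi>, T) \<in> S" using \<xi> by (simp add: S_def)
    ultimately show ?thesis by blast
  qed
  have ne: "S \<noteq> {}" by (auto simp: S_def intro: exI[of _ "(1, 0)"])
  have bdd: "bdd_above (F ` S)" unfolding bdd_above_def using up by blast
  have le: "(SUP p\<in>S. F p) \<le> K" using ne up by (intro cSUP_least) auto
  have ge: "K \<le> (SUP p\<in>S. F p)"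
  proof (rule ccontr)
    assume "\<not> K \<le> (SUP p\<in>S. F p)"
    then obtain p where p: "p \<in> S" "F p > K - (K - (SUP p\<in>S. F p))" using lo[of "K - (SUP p\<in>S. F p)"] by auto
    have "F p \<le> (SUP p\<in>S. F p)" using bdd p by (intro cSUP_upper) auto
    thus False using p by simp
  qed
  show ?thesis using le ge by (simp add: F_def S_def K_def)
qed




definition prodP :: "(nat \<Rightarrow> bool \<Rightarrow> real) \<Rightarrow> nat \<Rightarrow> bool list \<Rightarrow> real" where
  "prodP a n ys = (\<Prod>k<n. a k (ys ! k))"

definition LL :: "nat \<Rightarrow> bool list set" where
  "LL n = {ys. length ys = n}"

lemma finite_LL[simp]: "finite (LL n)"
proof -
  have "LL n = {xs. set xs \<subseteq> (UNIV :: bool set) \<and> length xs = n}" by (auto simp: LL_def)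
  thus ?thesis using finite_lists_length_eq[of "UNIV :: bool set" n] by simp
qed

lemma sum_LL_Suc: "sum f (LL (Suc n)) = (\<Sum>t\<in>UNIV. \<Sum>ys\<in>LL n. f (t # ys))"
proof -
  have eq: "LL (Suc n) = (\<lambda>(t, ys). t # ys) ` (UNIV \<times> LL n)"
    by (auto simp: LL_def length_Suc_conv image_iff)
  have inj: "inj_on (\<lambda>(t, ys). t # ys) (UNIV \<times> LL n)" by (auto simp: inj_on_def)
  have "sum f (LL (Suc n)) = sum (f \<circ> (\<lambda>(t, ys). t # ys)) (UNIV \<times> LL n)"
    unfolding eq by (rule sum.reindex[OF inj])
  also have "\<dots> = (\<Sum>(t, ys)\<in>UNIV \<times> LL n. f (t # ys))" by (rule sum.cong) auto
  also have "\<dots> = (\<Sum>t\<in>UNIV. \<Sum>ys\<in>LL n. f (t # ys))" by (rule sum.cartesian_product[symmetric])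
  finally show ?thesis .
qed

lemma prodP_Cons: "prodP a (Suc n) (t # ys) = a 0 t * prodP (\<lambda>k. a (Suc k)) n ys"
  unfolding prodP_def by (subst prod.lessThan_Suc_shift) simp

lemma UNIV_bool_sum: "(\<Sum>t\<in>(UNIV::bool set). f t) = f True + f False"
  by (simp add: UNIV_bool add.commute)

lemma prodP_sum1:
  assumes "\<And>k. a k True + a k False = 1"
  shows "(\<Sum>ys\<in>LL n. prodP a n ys) = 1"
  using assms
proof (induction n arbitrary: a)
  case 0 thus ?case by (simp add: LL_def prodP_def)
next
  case (Suc n)
  have "(\<Sum>ys\<in>LL (Suc n). prodP a (Suc n) ys) = (\<Sum>t\<in>UNIV. a 0 t * (\<Sum>ys\<in>LL n. prodP (\<lambda>k. a (Suc k)) n ys))"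
    by (simp add: sum_LL_Suc prodP_Cons sum_distrib_left)
  also have "\<dots> = 1" using Suc.IH[of "\<lambda>k. a (Suc k)"] Suc.prems[of 0] Suc.prems by (simp add: UNIV_bool_sum)
  finally show ?case .
qed

lemma prodP_marg:
  assumes "\<And>k. a k True + a k False = 1" and "j < n"
  shows "(\<Sum>ys\<in>LL n. if ys ! j then prodP a n ys else 0) = a j True"
  using assms
proof (induction n arbitrary: a j)
  case 0 thus ?case by simp
next
  case (Suc n)
  show ?case
  proof (cases j)
    case 0
    have "(\<Sum>ys\<in>LL (Suc n). if ys ! j then prodP a (Suc n) ys else 0)
        = (\<Sum>t\<in>UNIV. \<Sum>ys\<in>LL n. (if t then a 0 t else 0) * prodP (\<lambda>k. a (Suc k)) n ys)"
      unfolding sum_LL_Suc by (intro sum.cong refl) (simp add: prodP_Cons 0)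
    also have "\<dots> = (\<Sum>t\<in>UNIV. (if t then a 0 t else 0) * (\<Sum>ys\<in>LL n. prodP (\<lambda>k. a (Suc k)) n ys))"
      by (simp add: sum_distrib_left)
    also have "\<dots> = a j True" using prodP_sum1[of "\<lambda>k. a (Suc k)" n] Suc.prems 0 by (simp add: UNIV_bool_sum)
    finally show ?thesis .
  next
    case (Suc j')
    have "(\<Sum>ys\<in>LL (Suc n). if ys ! j then prodP a (Suc n) ys else 0)
        = (\<Sum>t\<in>UNIV. \<Sum>ys\<in>LL n. a 0 t * (if ys ! j' then prodP (\<lambda>k. a (Suc k)) n ys else 0))"
      unfolding sum_LL_Suc by (intro sum.cong refl) (simp add: prodP_Cons Suc)
    also have "\<dots> = (\<Sum>t\<in>UNIV. a 0 t * (\<Sum>ys\<in>LL n. if ys ! j' then prodP (\<lambda>k. a (Suc k)) n ys else 0))"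
      by (simp add: sum_distrib_left)
    also have "\<dots> = (\<Sum>t\<in>UNIV. a 0 t * a j True)"
      using Suc.IH[of "\<lambda>k. a (Suc k)" j'] Suc.prems \<open>j = Suc j'\<close> by simp
    also have "\<dots> = a j True" using Suc.prems(1)[of 0] by (simp add: UNIV_bool_sum) (metis add.commute distrib_right mult_1)
    finally show ?thesis .
  qed
qed

lemma prodP_marg_neg:
  assumes "\<And>k. a k True + a k False = 1" and "j < n"
  shows "(\<Sum>ys\<in>LL n. if \<not> ys ! j then prodP a n ys else 0) = 1 - a j True"
proof -
  have "(\<Sum>ys\<in>LL n. if \<not> ys ! j then prodP a n ys else 0)
      = (\<Sum>ys\<in>LL n. prodP a n ys) - (\<Sum>ys\<in>LL n. if ys ! j then prodP a n ys else 0)"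
    by (auto simp: sum_subtractf[symmetric] intro!: sum.cong)
  thus ?thesis using prodP_sum1[of a n, OF assms(1)] prodP_marg[of a j n, OF assms] by simp
qed

lemma prodP_nonneg: "(\<And>k t. a k t \<ge> 0) \<Longrightarrow> prodP a n ys \<ge> 0"
  unfolding prodP_def by (intro prod_nonneg) auto

lemma prodP_pos_imp:
  assumes "\<And>k t. a k t \<ge> 0" "\<And>k t. b k t \<ge> 0" "\<And>k t. a k t > 0 \<Longrightarrow> b k t > 0"
    and "prodP a n ys > 0"
  shows "prodP b n ys > 0"
proof -
  have "\<forall>k\<in>{..<n}. a k (ys ! k) \<noteq> 0" using assms(4) unfolding prodP_def by (metis finite_lessThan less_irrefl prod_zero_iff)
  have "\<forall>k\<in>{..<n}. b k (ys ! k) > 0"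
  proof
    fix k assume "k \<in> {..<n}"
    with \<open>\<forall>k\<in>{..<n}. a k (ys ! k) \<noteq> 0\<close> have "a k (ys ! k) \<noteq> 0" by blast
    hence "a k (ys ! k) > 0" using assms(1)[of k "ys ! k"] by (simp add: less_le)
    thus "b k (ys ! k) > 0" by (rule assms(3))
  qed
  thus ?thesis unfolding prodP_def by (intro prod_pos) auto
qed

lemma ln_prod_split:
  fixes x y x' y' :: real
  assumes "x \<ge> 0" "y \<ge> 0" "x > 0 \<longrightarrow> x' > 0" "y > 0 \<longrightarrow> y' > 0"
  shows "x * y * ln (x * y / (x' * y')) = x * y * ln (x / x') + x * (y * ln (y / y'))"
proof (cases "x = 0 \<or> y = 0")
  case True thus ?thesis by auto
next
  case False
  hence p: "x > 0" "y > 0" "x' > 0" "y' > 0" using assms by auto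
  have "ln (x * y / (x' * y')) = ln (x / x') + ln (y / y')"
    using p by (simp add: ln_mult[symmetric] ln_div) (simp add: ln_mult)
  thus ?thesis by (simp add: algebra_simps)
qed

lemma prodP_KL:
  assumes "\<And>k t. a k t \<ge> 0" "\<And>k t. b k t \<ge> 0" "\<And>k t. a k t > 0 \<Longrightarrow> b k t > 0"
    and "\<And>k. a k True + a k False = 1"
  shows "(\<Sum>ys\<in>LL n. prodP a n ys * ln (prodP a n ys / prodP b n ys))
       = (\<Sum>k<n. \<Sum>t\<in>UNIV. a k t * ln (a k t / b k t))"
  using assms
proof (induction n arbitrary: a b)
  case 0 thus ?case by (simp add: LL_def prodP_def)
next
  case (Suc n)
  let ?a = "\<lambda>k. a (Suc k)" and ?b = "\<lambda>k. b (Suc k)"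
  have IH: "(\<Sum>ys\<in>LL n. prodP ?a n ys * ln (prodP ?a n ys / prodP ?b n ys))
       = (\<Sum>k<n. \<Sum>t\<in>UNIV. ?a k t * ln (?a k t / ?b k t))"
    by (rule Suc.IH) (use Suc.prems in auto)
  have s1: "(\<Sum>ys\<in>LL n. prodP ?a n ys) = 1" by (rule prodP_sum1) (use Suc.prems in auto)
  have "(\<Sum>ys\<in>LL (Suc n). prodP a (Suc n) ys * ln (prodP a (Suc n) ys / prodP b (Suc n) ys))
      = (\<Sum>t\<in>UNIV. \<Sum>ys\<in>LL n. a 0 t * prodP ?a n ys * ln (a 0 t * prodP ?a n ys / (b 0 t * prodP ?b n ys)))"
    by (simp add: sum_LL_Suc prodP_Cons mult.assoc)
  also have "\<dots> = (\<Sum>t\<in>UNIV. \<Sum>ys\<in>LL n. a 0 t * prodP ?a n ys * ln (a 0 t / b 0 t)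
                    + a 0 t * (prodP ?a n ys * ln (prodP ?a n ys / prodP ?b n ys)))"
  proof (intro sum.cong refl)
    fix t ys
    show "a 0 t * prodP ?a n ys * ln (a 0 t * prodP ?a n ys / (b 0 t * prodP ?b n ys))
        = a 0 t * prodP ?a n ys * ln (a 0 t / b 0 t) + a 0 t * (prodP ?a n ys * ln (prodP ?a n ys / prodP ?b n ys))"
      by (rule ln_prod_split) (use Suc.prems prodP_nonneg[of ?a] prodP_pos_imp[of ?a ?b] in auto)
  qed
  also have "\<dots> = (\<Sum>t\<in>UNIV. a 0 t * ln (a 0 t / b 0 t) * (\<Sum>ys\<in>LL n. prodP ?a n ys)
                    + a 0 t * (\<Sum>ys\<in>LL n. prodP ?a n ys * ln (prodP ?a n ys / prodP ?b n ys)))"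
    by (simp add: sum.distrib sum_distrib_left sum_distrib_right algebra_simps)
  also have "\<dots> = (\<Sum>t\<in>UNIV. a 0 t * ln (a 0 t / b 0 t)) + (\<Sum>t\<in>UNIV. a 0 t) * (\<Sum>k<n. \<Sum>t\<in>UNIV. ?a k t * ln (?a k t / ?b k t))"
    unfolding s1 IH by (simp add: sum.distrib sum_distrib_right)
  also have "\<dots> = (\<Sum>k<Suc n. \<Sum>t\<in>UNIV. a k t * ln (a k t / b k t))"
    unfolding sum.lessThan_Suc_shift using Suc.prems(4)[of 0] by (simp add: UNIV_bool_sum)
  finally show ?case .
qed

lemma pt_tangent_fin:
  fixes p q r :: real
  assumes "p \<ge> 0" "q \<ge> 0" "p > 0 \<longrightarrow> q > 0" "r > 0"
  shows "p * ln r + p - r * q \<le> p * ln (p / q)"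
proof (cases "p = 0")
  case True thus ?thesis using assms by simp
next
  case False
  hence pq: "p > 0" "q > 0" using assms by auto
  have "p - r * q \<le> p * ln (p / (r * q))" by (rule xlnxy) (use pq assms in auto)
  also have "ln (p / (r * q)) = ln (p / q) - ln r" using pq assms by (simp add: ln_div ln_mult)
  finally show ?thesis by (simp add: algebra_simps)
qed

lemma logsum:
  fixes P Q :: "'a \<Rightarrow> real"
  assumes "finite S" "\<And>y. y \<in> S \<Longrightarrow> P y \<ge> 0" "\<And>y. y \<in> S \<Longrightarrow> Q y \<ge> 0"
    "\<And>y. y \<in> S \<Longrightarrow> P y > 0 \<Longrightarrow> Q y > 0"
  shows "(sum P S > 0 \<longrightarrow> sum Q S > 0) \<and> sum P S * ln (sum P S / sum Q S) \<le> (\<Sum>y\<in>S. P y * ln (P y / Q y))"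
proof (rule tangent_conc)
  fix r :: real assume r: "r > 0"
  have "sum P S * ln r + sum P S - r * sum Q S = (\<Sum>y\<in>S. P y * ln r + P y - r * Q y)"
    by (simp add: sum.distrib sum_subtractf sum_distrib_left sum_distrib_right)
  also have "\<dots> \<le> (\<Sum>y\<in>S. P y * ln (P y / Q y))"
    by (intro sum_mono pt_tangent_fin) (use assms r in auto)
  finally show "sum P S * ln r + sum P S - r * sum Q S \<le> (\<Sum>y\<in>S. P y * ln (P y / Q y))" .
qed (use assms in \<open>auto intro: sum_nonneg\<close>)




lemma sum_tangent1:
  fixes P Q :: "'a \<Rightarrow> real"
  assumes "\<And>y. y \<in> S \<Longrightarrow> P y \<ge> 0" "\<And>y. y \<in> S \<Longrightarrow> Q y \<ge> 0"
    "\<And>y. y \<in> S \<Longrightarrow> P y > 0 \<Longrightarrow> Q y > 0"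
  shows "sum P S - sum Q S \<le> (\<Sum>y\<in>S. P y * ln (P y / Q y))"
proof -
  have "sum P S - sum Q S = (\<Sum>y\<in>S. P y - Q y)" by (simp add: sum_subtractf)
  also have "\<dots> \<le> (\<Sum>y\<in>S. P y * ln (P y / Q y))"
    by (intro sum_mono xlnxy) (use assms in auto)
  finally show ?thesis .
qed

lemma conv_bound:
  assumes s2: "sigma2 > 0" and D: "D \<in> sets borel" and M: "M \<ge> 1"
    and en: "energy_ok n M f E" and E: "E > 0"
  shows "(1 - err_prob sigma2 n M f D g) * ln (real M) \<le> E / (2 * sigma2) + 2"
proof -
  define p where "p x = p_one sigma2 D x" for x
  have p01: "0 \<le> p x" "p x \<le> 1" for x using p_one_range[OF s2] by (auto simp: p_def)
  have dp: "p x > 0 \<longrightarrow> p 0 > 0" "p x < 1 \<longrightarrow> p 0 < 1" "binary_rel_entropy (p x) (p 0) \<le> x\<^sup>2 / (2 * sigma2)" for x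
    using dpi_gauss[OF s2 D, of x 0] by (auto simp: p_def)
  define aa where "aa m k t = (if t then p (f m k) else 1 - p (f m k))" for m k t
  define bb where "bb k t = (if t then p 0 else 1 - p 0)" for k :: nat and t
  have aa0: "aa m k t \<ge> 0" for m k t using p01 by (auto simp: aa_def)
  have bb0: "bb k t \<ge> 0" for k t using p01 by (auto simp: bb_def)
  have ab: "aa m k t > 0 \<Longrightarrow> bb k t > 0" for m k t using dp by (auto simp: aa_def bb_def)
  have aa1: "aa m k True + aa m k False = 1" for m k by (simp add: aa_def)
  have bb1: "bb k True + bb k False = 1" for k by (simp add: bb_def)
  define P where "P m ys = prodP (aa m) n ys" for m ys
  define Q where "Q ys = prodP bb n ys" for ys
  have P0: "P m ys \<ge> 0" for m ys unfolding P_def by (rule prodP_nonneg) (rule aa0)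
  have Q0: "Q ys \<ge> 0" for ys unfolding Q_def by (rule prodP_nonneg) (rule bb0)
  have PQ: "P m ys > 0 \<Longrightarrow> Q ys > 0" for m ys unfolding P_def Q_def
    by (rule prodP_pos_imp[of "aa m" bb]) (use aa0 bb0 ab in auto)
  have P1: "(\<Sum>ys\<in>LL n. P m ys) = 1" for m unfolding P_def by (rule prodP_sum1) (rule aa1)
  have Q1: "(\<Sum>ys\<in>LL n. Q ys) = 1" unfolding Q_def by (rule prodP_sum1) (rule bb1)
  have outP: "out_prob sigma2 D n (f m) ys = P m ys" for m ys
    unfolding out_prob_def P_def prodP_def aa_def p_def by simp
  define A where "A m = {ys \<in> LL n. g ys = m}" for m
  have A: "A m \<subseteq> LL n" "finite (A m)" for m by (auto simp: A_def)
  define c where "c m = sum (P m) (A m)" for m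
  define q where "q m = sum Q (A m)" for m
  have c0: "c m \<ge> 0" "q m \<ge> 0" for m using P0 Q0 by (auto simp: c_def q_def intro: sum_nonneg)
  have KL: "(\<Sum>ys\<in>LL n. P m ys * ln (P m ys / Q ys)) \<le> E / (2 * sigma2)" if m: "m \<in> {1..M}" for m
  proof -
    have "(\<Sum>ys\<in>LL n. P m ys * ln (P m ys / Q ys)) = (\<Sum>k<n. \<Sum>t\<in>UNIV. aa m k t * ln (aa m k t / bb k t))"
      unfolding P_def Q_def by (rule prodP_KL) (use aa0 bb0 ab aa1 in auto)
    also have "\<dots> = (\<Sum>k<n. binary_rel_entropy (p (f m k)) (p 0))"
      by (simp add: UNIV_bool_sum aa_def bb_def binary_rel_entropy_def)
    also have "\<dots> \<le> (\<Sum>k<n. (f m k)\<^sup>2 / (2 * sigma2))" by (intro sum_mono dp(3))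
    also have "\<dots> = (\<Sum>k<n. (f m k)\<^sup>2) / (2 * sigma2)" by (simp add: sum_divide_distrib)
    also have "\<dots> \<le> E / (2 * sigma2)" using en m s2 by (intro divide_right_mono) (auto simp: energy_ok_def)
    finally show ?thesis .
  qed
  have per: "c m * ln (c m / q m) \<le> E / (2 * sigma2) + 1 \<and> (c m > 0 \<longrightarrow> q m > 0)" if m: "m \<in> {1..M}" for m
  proof -
    have L1: "(c m > 0 \<longrightarrow> q m > 0) \<and> c m * ln (c m / q m) \<le> (\<Sum>ys\<in>A m. P m ys * ln (P m ys / Q ys))"
      unfolding c_def q_def by (rule logsum) (use A P0 Q0 PQ in auto)
    have L2: "sum (P m) (LL n - A m) - sum Q (LL n - A m) \<le> (\<Sum>ys\<in>LL n - A m. P m ys * ln (P m ys / Q ys))"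
      by (rule sum_tangent1) (use P0 Q0 PQ in auto)
    have "sum Q (LL n - A m) \<le> sum Q (LL n)" using Q0 by (intro sum_mono2) auto
    moreover have "sum (P m) (LL n - A m) \<ge> 0" using P0 by (intro sum_nonneg) auto
    ultimately have L3: "-1 \<le> (\<Sum>ys\<in>LL n - A m. P m ys * ln (P m ys / Q ys))" using L2 Q1 by linarith
    have "(\<Sum>ys\<in>LL n. P m ys * ln (P m ys / Q ys))
        = (\<Sum>ys\<in>A m. P m ys * ln (P m ys / Q ys)) + (\<Sum>ys\<in>LL n - A m. P m ys * ln (P m ys / Q ys))"
      using A(1)[of m] by (subst sum.subset_diff[of "A m"]) auto
    thus ?thesis using L1 L3 KL[OF m] by linarith
  qed
  have sq: "(\<Sum>m\<in>{1..M}. q m) \<le> 1"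
  proof -
    have "(\<Sum>m\<in>{1..M}. q m) = (\<Sum>m\<in>{1..M}. \<Sum>ys\<in>LL n. if g ys = m then Q ys else 0)"
      unfolding q_def A_def by (simp add: sum.inter_filter)
    also have "\<dots> = (\<Sum>ys\<in>LL n. \<Sum>m\<in>{1..M}. if g ys = m then Q ys else 0)" by (rule sum.swap)
    also have "\<dots> = (\<Sum>ys\<in>LL n. if g ys \<in> {1..M} then Q ys else 0)" by (simp add: sum.delta')
    also have "\<dots> \<le> (\<Sum>ys\<in>LL n. Q ys)" using Q0 by (intro sum_mono) auto
    finally show ?thesis using Q1 by simp
  qed
  define C where "C = (\<Sum>m\<in>{1..M}. c m)"
  have C0: "C \<ge> 0" using c0 by (auto simp: C_def intro: sum_nonneg)
  have Mpos: "real M > 0" using M by simp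
  have err: "err_prob sigma2 n M f D g = 1 - C / real M"
  proof -
    have e: "(\<Sum>ys\<in>{ys. length ys = n}. if g ys \<noteq> m then out_prob sigma2 D n (f m) ys else 0) = 1 - c m" for m
    proof -
      have "(\<Sum>ys\<in>LL n. if g ys \<noteq> m then P m ys else 0) = (\<Sum>ys\<in>LL n. P m ys) - (\<Sum>ys\<in>LL n. if g ys = m then P m ys else 0)"
        by (auto simp: sum_subtractf[symmetric] intro!: sum.cong)
      also have "(\<Sum>ys\<in>LL n. if g ys = m then P m ys else 0) = c m"
        unfolding c_def A_def by (simp add: sum.inter_filter)
      finally show ?thesis using P1 unfolding outP LL_def by simp
    qed
    have "err_prob sigma2 n M f D g = (1 / real M) * (\<Sum>m\<in>{1..M}. 1 - c m)"
      unfolding err_prob_def e by simp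
    also have "\<dots> = (1 / real M) * (real M - C)" by (simp add: sum_subtractf C_def)
    also have "\<dots> = 1 - C / real M" using Mpos by (simp add: field_simps)
    finally show ?thesis .
  qed
  show ?thesis
  proof (cases "C = 0")
    case True
    thus ?thesis using err E s2 by simp
  next
    case False
    hence Cpos: "C > 0" using C0 by simp
    have "(\<Sum>m\<in>{1..M}. c m * ln C + c m - C * q m) \<le> (\<Sum>m\<in>{1..M}. c m * ln (c m / q m))"
      by (intro sum_mono pt_tangent_fin) (use c0 per Cpos in auto)
    also have "\<dots> \<le> (\<Sum>m\<in>{1..M}. E / (2 * sigma2) + 1)" by (intro sum_mono) (use per in auto)
    finally have "C * ln C + C - C * (\<Sum>m\<in>{1..M}. q m) \<le> real M * (E / (2 * sigma2) + 1)"
      by (simp add: sum.distrib sum_subtractf sum_distrib_left sum_distrib_right C_def)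
    moreover have "C * (\<Sum>m\<in>{1..M}. q m) \<le> C" using sq Cpos by (simp add: mult_left_le)
    ultimately have CC: "C * ln C \<le> real M * (E / (2 * sigma2) + 1)" by linarith
    have "C / real M - 1 \<le> C / real M * ln (C / real M)" by (rule xlnx) (use Cpos Mpos in simp)
    hence "real M * (C / real M - 1) \<le> real M * (C / real M * ln (C / real M))"
      using Mpos by (intro mult_left_mono) auto
    moreover have "real M * (C / real M - 1) = C - real M" using Mpos by (simp add: field_simps)
    moreover have "real M * (C / real M * ln (C / real M)) = C * ln (C / real M)" using Mpos by simp
    ultimately have "C - real M \<le> C * ln (C / real M)" by simp
    also have "\<dots> = C * ln C - C * ln (real M)" using Cpos Mpos by (simp add: ln_div algebra_simps)
    finally have F1: "C - real M \<le> C * ln C - C * ln (real M)" .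
    have "real M * (E / (2 * sigma2) + 2) = real M * (E / (2 * sigma2) + 1) + real M" by (simp add: algebra_simps)
    hence "C * ln (real M) \<le> real M * (E / (2 * sigma2) + 2)" using CC F1 Cpos by linarith
    hence "C / real M * ln (real M) \<le> E / (2 * sigma2) + 2" using Mpos by (simp add: field_simps)
    thus ?thesis using err by simp
  qed
qed




definition ppm_dec :: "bool list \<Rightarrow> nat" where
  "ppm_dec ys = (if \<exists>k<length ys. ys ! k then Suc (LEAST k. ys ! k) else 0)"

definition ppm_enc :: "real \<Rightarrow> nat \<Rightarrow> nat \<Rightarrow> real" where
  "ppm_enc E m k = (if Suc k = m then sqrt E else 0)"

lemma ppm_dec_ok:
  assumes "j < length ys" "ys ! j" "\<forall>k<length ys. k \<noteq> j \<longrightarrow> \<not> ys ! k"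
  shows "ppm_dec ys = Suc j"
proof -
  have "(LEAST k. ys ! k) = j"
  proof (rule Least_equality)
    show "ys ! j" by (rule assms(2))
    fix k assume "ys ! k"
    show "j \<le> k"
    proof (rule ccontr)
      assume "\<not> j \<le> k" hence "k < j" by simp
      thus False using assms \<open>ys ! k\<close> by auto
    qed
  qed
  thus ?thesis using assms unfolding ppm_dec_def by auto
qed

lemma err_nonneg:
  assumes s2: "sigma2 > 0"
  shows "0 \<le> err_prob sigma2 n M f D g"
  unfolding err_prob_def out_prob_def
  using p_one_range[OF s2] by (auto intro!: divide_nonneg_nonneg mult_nonneg_nonneg sum_nonneg prod_nonneg)

lemma ach_err_bound:
  assumes s2: "sigma2 > 0" and E: "E \<ge> 0" and M: "M \<ge> 1"
  shows "err_prob sigma2 M M (ppm_enc E) D ppm_dec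
           \<le> (1 - p_one sigma2 D (sqrt E)) + real M * p_one sigma2 D 0"
proof -
  let ?n = M
  define p where "p x = p_one sigma2 D x" for x
  have p01: "0 \<le> p x" "p x \<le> 1" for x using p_one_range[OF s2] by (auto simp: p_def)
  define B where "B = (1 - p (sqrt E)) + real M * p 0"
  have inner: "(\<Sum>ys\<in>{ys. length ys = ?n}. if ppm_dec ys \<noteq> m then out_prob sigma2 D ?n (ppm_enc E m) ys else 0) \<le> B"
    if m: "m \<in> {1..M}" for m
  proof -
    define j where "j = m - 1"
    have j: "j < ?n" "Suc j = m" using m by (auto simp: j_def)
    define a where "a k t = (if t then p (ppm_enc E m k) else 1 - p (ppm_enc E m k))" for k t
    have a1: "a k True + a k False = 1" for k by (simp add: a_def)
    have a0: "a k t \<ge> 0" for k t using p01 by (auto simp: a_def)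
    define P where "P ys = prodP a ?n ys" for ys
    have P0: "P ys \<ge> 0" for ys unfolding P_def by (rule prodP_nonneg) (rule a0)
    have outP: "out_prob sigma2 D ?n (ppm_enc E m) ys = P ys" for ys
      unfolding out_prob_def P_def prodP_def a_def p_def by simp
    have pw: "(if ppm_dec ys \<noteq> m then P ys else 0)
        \<le> (if \<not> ys ! j then P ys else 0) + (\<Sum>k\<in>{..<?n} - {j}. if ys ! k then P ys else 0)"
      if ys: "ys \<in> LL ?n" for ys
    proof (cases "ppm_dec ys \<noteq> m \<and> ys ! j")
      case True
      have "\<exists>k<length ys. k \<noteq> j \<and> ys ! k"
      proof (rule ccontr)
        assume "\<not> ?thesis"
        hence "ppm_dec ys = Suc j" using True ys j by (intro ppm_dec_ok) (auto simp: LL_def)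
        thus False using True j by simp
      qed
      then obtain k where k: "k < ?n" "k \<noteq> j" "ys ! k" using ys by (auto simp: LL_def)
      have "(if ys ! k then P ys else 0) \<le> (\<Sum>k\<in>{..<?n} - {j}. if ys ! k then P ys else 0)"
        by (rule member_le_sum[where f = "\<lambda>k. if ys ! k then P ys else 0"]) (use k P0 in auto)
      thus ?thesis using k True by simp
    next
      case False
      have "0 \<le> (\<Sum>k\<in>{..<?n} - {j}. if ys ! k then P ys else 0)" using P0 by (intro sum_nonneg) auto
      thus ?thesis using False P0[of ys] by auto
    qed
    have "(\<Sum>ys\<in>{ys. length ys = ?n}. if ppm_dec ys \<noteq> m then out_prob sigma2 D ?n (ppm_enc E m) ys else 0)
        = (\<Sum>ys\<in>LL ?n. if ppm_dec ys \<noteq> m then P ys else 0)" unfolding outP LL_def by simp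
    also have "\<dots> \<le> (\<Sum>ys\<in>LL ?n. (if \<not> ys ! j then P ys else 0) + (\<Sum>k\<in>{..<?n} - {j}. if ys ! k then P ys else 0))"
      by (intro sum_mono pw)
    also have "\<dots> = (\<Sum>ys\<in>LL ?n. if \<not> ys ! j then P ys else 0) + (\<Sum>k\<in>{..<?n} - {j}. \<Sum>ys\<in>LL ?n. if ys ! k then P ys else 0)"
      by (simp add: sum.distrib sum.swap[of _ "LL ?n"])
    also have "\<dots> = (1 - a j True) + (\<Sum>k\<in>{..<?n} - {j}. a k True)"
      unfolding P_def using prodP_marg_neg[of a j ?n, OF a1 j(1)] prodP_marg[of a _ ?n, OF a1] by simp
    also have "\<dots> = (1 - p (sqrt E)) + (\<Sum>k\<in>{..<?n} - {j}. p 0)"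
      using j by (intro arg_cong2[where f = "(+)"] sum.cong) (auto simp: a_def ppm_enc_def)
    also have "\<dots> \<le> B"
    proof -
      have "card ({..<?n} - {j}) \<le> ?n" by (metis card_Diff1_le card_lessThan finite_lessThan)
      hence "real (card ({..<?n} - {j})) * p 0 \<le> real M * p 0" using p01 by (intro mult_right_mono) auto
      thus ?thesis by (simp add: B_def)
    qed
    finally show ?thesis .
  qed
  have "err_prob sigma2 M M (ppm_enc E) D ppm_dec \<le> (1 / real M) * (\<Sum>m\<in>{1..M}. B)"
    unfolding err_prob_def using M by (intro mult_left_mono sum_mono inner) auto
  also have "\<dots> = B" using M by simp
  finally show ?thesis by (simp add: B_def p_def)
qed

lemma exp_neg_lim:
  fixes c :: real
  assumes "c < 0"
  shows "((\<lambda>E. exp (c * E)) \<longlongrightarrow> 0) at_top"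
proof -
  have "filterlim (\<lambda>E. c * E) at_bot at_top"
    by (rule filterlim_tendsto_neg_mult_at_bot[OF tendsto_const assms filterlim_ident])
  thus ?thesis by (rule filterlim_compose[OF exp_at_bot])
qed




lemma converse_le:
  assumes s2: "sigma2 > 0" and ach: "achievable_rpue sigma2 R"
  shows "R \<le> 1 / (2 * sigma2)"
proof (rule ccontr)
  define K where "K = 1 / (2 * sigma2)"
  have K: "K > 0" using s2 by (simp add: K_def)
  assume "\<not> R \<le> 1 / (2 * sigma2)"
  hence RK: "R > K" by (simp add: K_def)
  define eps where "eps = (R - K) / 2"
  have eps: "eps > 0" using RK by (simp add: eps_def)
  obtain n M f D g where ev: "\<forall>\<^sub>F E in at_top. M E \<ge> 1 \<and> D E \<in> sets borel \<and> energy_ok (n E) (M E) (f E) E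
                          \<and> ln (real (M E)) / E > R - eps"
    and lim: "((\<lambda>E. err_prob sigma2 (n E) (M E) (f E) (D E) (g E)) \<longlongrightarrow> 0) at_top"
    using ach eps unfolding achievable_rpue_def by blast
  define \<delta> where "\<delta> = eps / (2 * (K + eps))"
  have \<delta>: "\<delta> > 0" "\<delta> < 1" using eps K by (auto simp: \<delta>_def field_simps)
  have "\<forall>\<^sub>F E in at_top. err_prob sigma2 (n E) (M E) (f E) (D E) (g E) < \<delta>"
    by (rule order_tendstoD(2)[OF lim \<delta>(1)])
  moreover have "\<forall>\<^sub>F E in at_top. E > 4 / eps" by (rule eventually_gt_at_top)
  ultimately have "\<forall>\<^sub>F E in at_top. (M E \<ge> 1 \<and> D E \<in> sets borel \<and> energy_ok (n E) (M E) (f E) E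
                          \<and> ln (real (M E)) / E > R - eps) \<and> err_prob sigma2 (n E) (M E) (f E) (D E) (g E) < \<delta> \<and> E > 4 / eps"
    using ev by eventually_elim auto
  then obtain N where "\<forall>E\<ge>N. (M E \<ge> 1 \<and> D E \<in> sets borel \<and> energy_ok (n E) (M E) (f E) E
                          \<and> ln (real (M E)) / E > R - eps) \<and> err_prob sigma2 (n E) (M E) (f E) (D E) (g E) < \<delta> \<and> E > 4 / eps"
    unfolding eventually_at_top_linorder by blast
  hence H: "M N \<ge> 1" "D N \<in> sets borel" "energy_ok (n N) (M N) (f N) N" "ln (real (M N)) / N > R - eps"
    "err_prob sigma2 (n N) (M N) (f N) (D N) (g N) < \<delta>" "N > 4 / eps" by auto
  define E where "E = N"
  define L where "L = ln (real (M N))"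
  define er where "er = err_prob sigma2 (n N) (M N) (f N) (D N) (g N)"
  have "4 / eps > 0" using eps by simp
  hence E: "E > 0" using H(6) unfolding E_def by linarith
  have cb: "(1 - er) * L \<le> E / (2 * sigma2) + 2"
    unfolding er_def L_def E_def by (rule conv_bound[OF s2 H(2) H(1) H(3)]) (use E in \<open>simp add: E_def\<close>)
  have "R - eps = K + eps" by (simp add: eps_def field_simps)
  hence "L / E > K + eps" using H(4) by (simp add: L_def E_def)
  hence L: "L > (K + eps) * E" using E by (simp add: field_simps)
  have KE: "(K + eps) * E > 0" using K eps E by simp
  have "(1 - \<delta>) * ((K + eps) * E) \<le> (1 - \<delta>) * L" using L \<delta> by (intro mult_left_mono) auto
  also have "\<dots> \<le> (1 - er) * L" using H(5) L KE by (intro mult_right_mono) (auto simp: er_def)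
  also have "\<dots> \<le> K * E + 2" using cb by (simp add: K_def)
  finally have A: "(1 - \<delta>) * ((K + eps) * E) \<le> K * E + 2" .
  have "(1 - \<delta>) * (K + eps) = K + eps / 2" using K eps by (simp add: \<delta>_def field_simps)
  hence "(K + eps / 2) * E \<le> K * E + 2" using A by (simp add: mult.assoc[symmetric])
  hence "eps * E \<le> 4" by (simp add: algebra_simps)
  moreover have "eps * E > 4" using H(6) eps by (simp add: E_def field_simps)
  ultimately show False by simp
qed




lemma achievable_K:
  assumes s2: "sigma2 > 0"
  shows "achievable_rpue sigma2 (1 / (2 * sigma2))"
  unfolding achievable_rpue_def
proof (intro allI impI)
  fix eps :: real assume eps: "eps > 0"
  define K where "K = 1 / (2 * sigma2)"
  have K: "K > 0" using s2 by (simp add: K_def)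
  define e where "e = min eps K"
  have e: "e > 0" "e \<le> eps" "e \<le> K" using eps K by (auto simp: e_def)
  define \<alpha> where "\<alpha> = K - e / 2"
  define x where "x = e / (4 * K)"
  have x: "0 < x" "x \<le> 1/4" using e K by (auto simp: x_def field_simps)
  define \<beta> where "\<beta> = 1 - x / 2"
  have \<beta>: "0 < \<beta>" "\<beta> < 1" "1 - x \<le> \<beta>\<^sup>2" using x by (auto simp: \<beta>_def power2_eq_square field_simps)
  have ab: "\<alpha> - \<beta>\<^sup>2 * K < 0"
  proof -
    have "(1 - x) * K \<le> \<beta>\<^sup>2 * K" using \<beta> K by (intro mult_right_mono) auto
    moreover have "(1 - x) * K = K - e / 4" using K by (simp add: x_def field_simps)
    ultimately show ?thesis using e by (simp add: \<alpha>_def)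
  qed
  define MM where "MM E = nat \<lceil>exp (\<alpha> * E)\<rceil>" for E :: real
  define DD where "DD E = {y. \<beta> * sqrt E \<le> y}" for E :: real
  have MM1: "MM E \<ge> 1" for E
  proof -
    have "0 < exp (\<alpha> * E)" by simp
    hence "0 < \<lceil>exp (\<alpha> * E)\<rceil>" by (simp add: zero_less_ceiling)
    hence "0 < nat \<lceil>exp (\<alpha> * E)\<rceil>" by simp
    thus ?thesis unfolding MM_def by linarith
  qed
  have MMge: "real (MM E) \<ge> exp (\<alpha> * E)" for E unfolding MM_def by (rule real_nat_ceiling_ge)
  have MMle: "real (MM E) \<le> exp (\<alpha> * E) + 1" for E
  proof -
    have "real_of_int \<lceil>exp (\<alpha> * E)\<rceil> < exp (\<alpha> * E) + 1" using ceiling_correct[of "exp (\<alpha> * E)"] by linarith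
    moreover have "\<lceil>exp (\<alpha> * E)\<rceil> \<ge> 0" by (simp add: less_trans[OF _ exp_gt_zero])
    ultimately show ?thesis by (simp add: MM_def)
  qed
  have en: "energy_ok (MM E) (MM E) (ppm_enc E) E" if E: "E \<ge> 0" for E
    unfolding energy_ok_def
  proof
    fix m assume m: "m \<in> {1..MM E}"
    have "(\<Sum>k<MM E. (ppm_enc E m k)\<^sup>2) = (\<Sum>k<MM E. if k = m - 1 then E else 0)"
      using m E by (intro sum.cong) (auto simp: ppm_enc_def)
    also have "\<dots> = E" using m by (simp add: sum.delta) linarith
    finally show "(\<Sum>k<MM E. (ppm_enc E m k)\<^sup>2) \<le> E" by simp
  qed
  have rate: "ln (real (MM E)) / E > K - eps" if E: "E > 0" for E
  proof -
    have "\<alpha> * E \<le> ln (real (MM E))"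
    proof -
      have "ln (exp (\<alpha> * E)) \<le> ln (real (MM E))" using MMge[of E] MM1[of E] by (subst ln_le_cancel_iff) auto
      thus ?thesis by simp
    qed
    hence "\<alpha> \<le> ln (real (MM E)) / E" using E by (simp add: field_simps)
    moreover have "K - eps < \<alpha>" using e by (simp add: \<alpha>_def)
    ultimately show ?thesis by simp
  qed
  define c1 where "c1 = -((1 - \<beta>)\<^sup>2 * K)"
  define c2 where "c2 = \<alpha> - \<beta>\<^sup>2 * K"
  define c3 where "c3 = -(\<beta>\<^sup>2 * K)"
  have cs: "c1 < 0" "c2 < 0" "c3 < 0" using \<beta> K ab by (auto simp: c1_def c2_def c3_def)
  have bnd: "err_prob sigma2 (MM E) (MM E) (ppm_enc E) (DD E) ppm_dec
      \<le> exp (c1 * E) + exp (c2 * E) + exp (c3 * E)" if E: "E \<ge> 0" for E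
  proof -
    have sE: "(sqrt E)\<^sup>2 = E" "sqrt E \<ge> 0" using E by auto
    have lt: "1 - p_one sigma2 (DD E) (sqrt E) \<le> exp (-(sqrt E - \<beta> * sqrt E)\<^sup>2 / (2 * sigma2))"
      unfolding DD_def by (rule lower_tail[OF s2]) (use \<beta> sE in \<open>simp add: mult_left_le_one_le\<close>)
    have "-(sqrt E - \<beta> * sqrt E)\<^sup>2 / (2 * sigma2) = c1 * E"
    proof -
      have "sqrt E - \<beta> * sqrt E = (1 - \<beta>) * sqrt E" by (simp add: algebra_simps)
      hence "(sqrt E - \<beta> * sqrt E)\<^sup>2 = (1 - \<beta>)\<^sup>2 * (sqrt E)\<^sup>2" by (simp only: power_mult_distrib)
      thus ?thesis using sE by (simp add: c1_def K_def)
    qed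
    hence lt': "1 - p_one sigma2 (DD E) (sqrt E) \<le> exp (c1 * E)" using lt by simp
    have ut: "p_one sigma2 (DD E) 0 \<le> exp (-(\<beta> * sqrt E - 0)\<^sup>2 / (2 * sigma2))"
      unfolding DD_def by (rule upper_tail[OF s2]) (use \<beta> sE in simp)
    have "-(\<beta> * sqrt E - 0)\<^sup>2 / (2 * sigma2) = c3 * E"
      using sE by (simp add: c3_def K_def power_mult_distrib)
    hence ut': "p_one sigma2 (DD E) 0 \<le> exp (c3 * E)" using ut by simp
    have p0: "p_one sigma2 (DD E) 0 \<ge> 0" using p_one_range[OF s2] by simp
    have "real (MM E) * p_one sigma2 (DD E) 0 \<le> (exp (\<alpha> * E) + 1) * exp (c3 * E)"
      using MMle[of E] ut' p0 by (intro mult_mono) auto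
    also have "\<dots> = exp (\<alpha> * E) * exp (c3 * E) + exp (c3 * E)" by (simp add: distrib_right)
    also have "exp (\<alpha> * E) * exp (c3 * E) = exp (c2 * E)"
      unfolding exp_add[symmetric] c2_def c3_def by (simp add: algebra_simps)
    finally have "real (MM E) * p_one sigma2 (DD E) 0 \<le> exp (c2 * E) + exp (c3 * E)" .
    thus ?thesis using ach_err_bound[OF s2 E MM1[of E], of "DD E"] lt' by simp
  qed
  have lim0: "((\<lambda>E. exp (c1 * E) + exp (c2 * E) + exp (c3 * E)) \<longlongrightarrow> 0) at_top"
    using tendsto_add[OF tendsto_add[OF exp_neg_lim[OF cs(1)] exp_neg_lim[OF cs(2)]] exp_neg_lim[OF cs(3)]]
    by simp
  have errlim: "((\<lambda>E. err_prob sigma2 (MM E) (MM E) (ppm_enc E) (DD E) ppm_dec) \<longlongrightarrow> 0) at_top"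
  proof (rule tendsto_sandwich[OF _ _ tendsto_const lim0])
    show "\<forall>\<^sub>F E in at_top. 0 \<le> err_prob sigma2 (MM E) (MM E) (ppm_enc E) (DD E) ppm_dec"
      using err_nonneg[OF s2] by simp
    show "\<forall>\<^sub>F E in at_top. err_prob sigma2 (MM E) (MM E) (ppm_enc E) (DD E) ppm_dec
        \<le> exp (c1 * E) + exp (c2 * E) + exp (c3 * E)"
      using eventually_ge_at_top[of "0::real"] by eventually_elim (rule bnd)
  qed
  have evs: "\<forall>\<^sub>F E in at_top. MM E \<ge> 1 \<and> DD E \<in> sets borel \<and> energy_ok (MM E) (MM E) (ppm_enc E) E
                          \<and> ln (real (MM E)) / E > 1 / (2 * sigma2) - eps"
    using eventually_gt_at_top[of "0::real"]
  proof eventually_elim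
    case (elim E)
    have "DD E \<in> sets borel" unfolding DD_def by measurable
    thus ?case using MM1 en[of E] rate[of E] elim by (simp add: K_def)
  qed
  show "\<exists>(n :: real \<Rightarrow> nat) (M :: real \<Rightarrow> nat) (f :: real \<Rightarrow> nat \<Rightarrow> nat \<Rightarrow> real)
        (D :: real \<Rightarrow> real set) (g :: real \<Rightarrow> bool list \<Rightarrow> nat).
       (\<forall>\<^sub>F E in at_top. M E \<ge> 1 \<and> D E \<in> sets borel \<and> energy_ok (n E) (M E) (f E) E
                          \<and> ln (real (M E)) / E > 1 / (2 * sigma2) - eps)
       \<and> ((\<lambda>E. err_prob sigma2 (n E) (M E) (f E) (D E) (g E)) \<longlongrightarrow> 0) at_top"
    apply (rule exI[of _ MM], rule exI[of _ MM], rule exI[of _ ppm_enc], rule exI[of _ DD], rule exI[of _ "\<lambda>_. ppm_dec"])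
    using evs errlim by simp
qed

theorem theorem1:
  fixes sigma2 :: real
  assumes "sigma2 > 0"
  shows "capacity_per_unit_energy sigma2 = 1 / (2 * sigma2)
    \<and> (SUP p \<in> {p :: real \<times> real. fst p \<noteq> 0}.
          binary_rel_entropy (Qfun ((snd p - fst p) / sqrt sigma2)) (Qfun (snd p / sqrt sigma2))
            / (fst p)\<^sup>2) = 1 / (2 * sigma2)"
proof
  show "capacity_per_unit_energy sigma2 = 1 / (2 * sigma2)"
    unfolding capacity_per_unit_energy_def
    by (rule cSup_eq_maximum) (use achievable_K[OF assms] converse_le[OF assms] in auto)
  show "(SUP p \<in> {p :: real \<times> real. fst p \<noteq> 0}.
          binary_rel_entropy (Qfun ((snd p - fst p) / sqrt sigma2)) (Qfun (snd p / sqrt sigma2))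
            / (fst p)\<^sup>2) = 1 / (2 * sigma2)"
    by (rule Fsup[OF assms])
qed


end
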